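(* Let $m\ge4$, $a\in Q\otimes V^{\otimes m-4}\otimes Q$ and $b\in V^{\otimes m-2}$. Assume that there exists $p\ge1$ such that $|a\,\omega_0^l+b\,\omega_0^{l+1}|=0$ for all $l\ge p$. Then $a=0$.
   Context: $\mathbb{K}$ is a field of characteristic zero and $V$ a symplectic $\mathbb{K}$-vector space of dimension $2g$ with symplectic basis $a_1,\ldots,a_g,b_1,\ldots,b_g$; $\omega_0=\sum_{i=1}^g(a_i\otimes b_i-b_i\otimes a_i)\in V^{\otimes2}$ represents the symplectic form. $C\colon V^{\otimes2}\to\mathbb{K}$ is the non-degenerate pairing given by the symplectic form, $C(a_i\otimes b_j)=\delta_{ij}$, $C(b_i\otimes a_j)=-\delta_{ij}$, $C(a_i\otimes a_j)=C(b_i\otimes b_j)=0$ (so $C(\omega_0)=2g$), and $Q=\ker C\subset V^{\otimes 2}$. $T(V)$ is the tensor algebra and $|x|$ denotes the class of $x$ in $T(V)/[T(V),T(V)]$. *)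

theory Defs
  imports Main
begin

text \<open>Tensor algebra T(V) of the symplectic space V with symplectic basis
  a_i = (i, True), b_i = (i, False), i ranging over the finite type 'i (so g = CARD('i)).
  A tensor is a function from words in the basis letters to the coefficient field;
  the word [l1,...,ln] stands for the basis tensor l1 (x) ... (x) ln.\<close>

type_synonym ('i, 'k) tens = "('i \<times> bool) list \<Rightarrow> 'k"

definition finsupp :: "('i, 'k::zero) tens \<Rightarrow> bool" where
  "finsupp x \<longleftrightarrow> finite {w. x w \<noteq> 0}"

definition hom :: "nat \<Rightarrow> ('i, 'k::zero) tens set" where
  "hom n = {x. \<forall>w. length w \<noteq> n \<longrightarrow> x w = 0}"

definition tmul :: "('i, 'k::comm_ring_1) tens \<Rightarrow> ('i, 'k) tens \<Rightarrow> ('i, 'k) tens" where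
  "tmul x y = (\<lambda>w. \<Sum>k\<in>{0..length w}. x (take k w) * y (drop k w))"

definition tone :: "('i, 'k::comm_ring_1) tens" where
  "tone = (\<lambda>w. if w = [] then 1 else 0)"

primrec tpow :: "('i, 'k::comm_ring_1) tens \<Rightarrow> nat \<Rightarrow> ('i, 'k) tens" where
  "tpow x 0 = tone"
| "tpow x (Suc n) = tmul (tpow x n) x"

inductive_set kspan :: "('i, 'k::comm_ring_1) tens set \<Rightarrow> ('i, 'k) tens set"
  for S where
  zero: "(\<lambda>w. 0) \<in> kspan S"
| add: "x \<in> S \<Longrightarrow> y \<in> kspan S \<Longrightarrow> (\<lambda>w. c * x w + y w) \<in> kspan S"

definition omega0 :: "('i::finite, 'k::comm_ring_1) tens" where
  "omega0 = (\<lambda>w. if (\<exists>i. w = [(i, True), (i, False)]) then 1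
                 else if (\<exists>i. w = [(i, False), (i, True)]) then -1 else 0)"

definition Cpair :: "('i::finite, 'k::comm_ring_1) tens \<Rightarrow> 'k" where
  "Cpair x = (\<Sum>i\<in>UNIV. x [(i, True), (i, False)] - x [(i, False), (i, True)])"

definition Qsp :: "('i::finite, 'k::comm_ring_1) tens set" where
  "Qsp = {x \<in> hom 2. Cpair x = 0}"

definition QVQ :: "nat \<Rightarrow> ('i::finite, 'k::comm_ring_1) tens set" where
  "QVQ m = kspan {tmul (tmul q v) q' | q v q'. q \<in> Qsp \<and> v \<in> hom (m - 4) \<and> q' \<in> Qsp}"

text \<open>The commutator subspace [T(V), T(V)]; |x| = 0 iff x lies in it.\<close>
definition commsp :: "('i, 'k::comm_ring_1) tens set" where
  "commsp = kspan {(\<lambda>w. tmul u v w - tmul v u w) | u v. finsupp u \<and> finsupp v}"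

definition cyc_zero :: "('i, 'k::comm_ring_1) tens \<Rightarrow> bool" where
  "cyc_zero x \<longleftrightarrow> x \<in> commsp"

end

theory Submission
  imports Defs
begin

lemma tmul_left:
  assumes "x \<in> hom k"
  shows "tmul x y w = (if k \<le> length w then x (take k w) * y (drop k w) else 0)"
proof -
  have "tmul x y w = (\<Sum>i\<in>{0..length w}. if i = k then x (take i w) * y (drop i w) else 0)"
    unfolding tmul_def
    by (rule sum.cong) (use assms in \<open>auto simp: hom_def\<close>)
  also have "\<dots> = (if k \<le> length w then x (take k w) * y (drop k w) else 0)"
    by (simp add: sum.delta)
  finally show ?thesis .
qed

lemma tmul_right:
  assumes "y \<in> hom k"
  shows "tmul x y w = (if k \<le> length w then x (take (length w - k) w) * y (drop (length w - k) w) else 0)"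
proof -
  have "tmul x y w = (\<Sum>i\<in>{0..length w}. if i = length w - k \<and> k \<le> length w then x (take i w) * y (drop i w) else 0)"
    unfolding tmul_def
    by (rule sum.cong) (use assms in \<open>auto simp: hom_def\<close>)
  also have "\<dots> = (if k \<le> length w then x (take (length w - k) w) * y (drop (length w - k) w) else 0)"
    by (cases "k \<le> length w") (simp_all add: sum.delta)
  finally show ?thesis .
qed

lemma tmul_hom: "x \<in> hom i \<Longrightarrow> y \<in> hom j \<Longrightarrow> tmul x y \<in> hom (i + j)"
  unfolding hom_def[of "i+j"] by (auto simp: tmul_left hom_def)

lemma omega0_hom: "omega0 \<in> hom 2"
  by (auto simp: hom_def omega0_def)

fun Om :: "('i::finite \<times> bool) list \<Rightarrow> 'k::comm_ring_1" where
  "Om [] = 1"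
| "Om [x] = 0"
| "Om (x # y # z) = omega0 [x, y] * Om z"

lemma Om_append: "even (length X) \<Longrightarrow> Om (X @ Y) = Om X * Om Y"
  by (induction X rule: Om.induct) (auto simp: algebra_simps)

lemma Om_zero: "even (length X) \<Longrightarrow> (omega0 [x, y] :: 'k::comm_ring_1) = 0 \<Longrightarrow> Om (X @ x # y # Y) = (0::'k)"
proof -
  assume a: "even (length X)" "(omega0 [x, y] :: 'k::comm_ring_1) = 0"
  have "Om (X @ x # y # Y) = Om X * (Om (x # y # Y) :: 'k)" by (rule Om_append) (fact a)
  then show ?thesis using a(2) by simp
qed

lemma Om_kill: fixes X p Y :: "('i::finite \<times> bool) list" assumes "even (length X)" "length p = 2" shows "Om (X @ p @ Y) = Om X * (omega0 p :: 'k::comm_ring_1) * Om Y"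
proof -
  obtain x y where p: "p = [x, y]" using assms(2)
    by (metis (no_types, lifting) One_nat_def Suc_1 length_0_conv length_Suc_conv)
  have "Om (X @ x # y # Y) = Om X * (Om (x # y # Y) :: 'k)" by (rule Om_append) (fact assms(1))
  then show ?thesis by (simp add: p mult.assoc)
qed

lemma Om_two: "length p = 2 \<Longrightarrow> Om p = omega0 p"
  by (metis (no_types, lifting) One_nat_def Suc_1 length_0_conv length_Suc_conv Om.simps(1,3) mult_1_right)

lemma tpow_omega: "tpow (omega0 :: ('i::finite, 'k::comm_ring_1) tens) L w = (if length w = 2 * L then Om w else 0)"
proof (induction L arbitrary: w)
  case 0
  then show ?case by (cases w) (auto simp: tone_def)
next
  case (Suc L)
  show ?case
  proof (cases "2 \<le> length w")
    case True
    have st: "tmul (tpow (omega0 :: ('i::finite, 'k::comm_ring_1) tens) L) omega0 w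
       = tpow omega0 L (take (length w - 2) w) * omega0 (drop (length w - 2) w)"
      using True by (simp add: tmul_right[OF omega0_hom])
    show ?thesis
    proof (cases "length w = 2 * Suc L")
      case True
      have e: "w = take (length w - 2) w @ drop (length w - 2) w" by simp
      have "(Om w :: 'k) = Om (take (length w - 2) w) * Om (drop (length w - 2) w)"
        by (subst e) (rule Om_append, use True in simp)
      also have "Om (drop (length w - 2) w) = (omega0 (drop (length w - 2) w) :: 'k)"
        by (rule Om_two) (use True in simp)
      finally show ?thesis using True by (simp add: st Suc.IH)
    next
      case False
      then have "length w - 2 \<noteq> 2 * L" using True by simp
      then show ?thesis using False st by (simp add: Suc.IH)
    qed
  next
    case False
    then show ?thesis by (auto simp: tmul_right[OF omega0_hom])
  qed
qed

definition rotsum :: "('i, 'k::comm_ring_1) tens \<Rightarrow> ('i \<times> bool) list \<Rightarrow> 'k" where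
  "rotsum x w = (\<Sum>s<length w. x (rotate s w))"

lemma rot_take_drop:
  assumes "length z = n" "k \<le> n"
  shows "take (n - k) (rotate k z) = drop k z" "drop (n - k) (rotate k z) = take k z"
proof -
  have "take (n - k) (rotate k z) = drop k z \<and> drop (n - k) (rotate k z) = take k z"
  proof (cases "k = n")
    case True then show ?thesis using assms by simp
  next
    case False
    then have "k < n" using assms by simp
    then have "rotate k z = drop k z @ take k z" using assms by (simp add: rotate_drop_take)
    then show ?thesis using assms \<open>k < n\<close> by simp
  qed
  then show "take (n - k) (rotate k z) = drop k z" "drop (n - k) (rotate k z) = take k z" by auto
qed

lemma rotsum_comm: "rotsum (\<lambda>z. tmul u v z - tmul v u z) w = 0"
proof (cases "w = []")
  case True then show ?thesis by (simp add: rotsum_def)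
next
  case False
  define n where "n = length w"
  have n0: "0 < n" using False by (simp add: n_def)
  define S where "S = {..<n} \<times> {0..n}"
  have lhs: "(\<Sum>s<n. tmul u v (rotate s w)) = (\<Sum>(s,k)\<in>S. u (take k (rotate s w)) * v (drop k (rotate s w)))"
    unfolding S_def tmul_def by (simp add: sum.cartesian_product n_def)
  have rhs: "(\<Sum>s<n. tmul v u (rotate s w)) = (\<Sum>(s,k)\<in>S. v (take k (rotate s w)) * u (drop k (rotate s w)))"
    unfolding S_def tmul_def by (simp add: sum.cartesian_product n_def)
  define h where "h = (\<lambda>(s::nat,k::nat). ((s + k) mod n, n - k))"
  have hh: "h (h a) = a" if "a \<in> S" for a
  proof -
    obtain s k where a: "a = (s,k)" "s < n" "k \<le> n" using \<open>a \<in> S\<close> by (cases a) (auto simp: S_def)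
    have "((s + k) mod n + (n - k)) mod n = (s + k + (n - k)) mod n" by (simp add: mod_add_left_eq)
    also have "\<dots> = s" using a by simp
    finally show ?thesis using a by (simp add: h_def)
  qed
  have hS: "h a \<in> S" if "a \<in> S" for a using that n0 by (auto simp: S_def h_def)
  have eq: "(\<lambda>(s,k). v (take k (rotate s w)) * u (drop k (rotate s w))) (h a)
      = (\<lambda>(s,k). u (take k (rotate s w)) * v (drop k (rotate s w))) a" if "a \<in> S" for a
  proof -
    obtain s k where a: "a = (s,k)" "s < n" "k \<le> n" using \<open>a \<in> S\<close> by (cases a) (auto simp: S_def)
    have r: "rotate ((s + k) mod n) w = rotate k (rotate s w)"
      by (metis n_def rotate_conv_mod rotate_rotate add.commute)
    have l: "length (rotate s w) = n" by (simp add: n_def)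
    show ?thesis using a rot_take_drop[OF l a(3)] by (simp add: h_def r mult.commute)
  qed
  have "(\<Sum>(s,k)\<in>S. v (take k (rotate s w)) * u (drop k (rotate s w)))
      = (\<Sum>(s,k)\<in>S. u (take k (rotate s w)) * v (drop k (rotate s w)))"
  proof (rule sum.reindex_bij_witness[where i=h and j=h])
    fix a assume a: "a \<in> S"
    show "h (h a) = a" "h a \<in> S" using hh[OF a] hS[OF a] by auto
    show "(\<lambda>(s,k). u (take k (rotate s w)) * v (drop k (rotate s w))) (h a)
      = (\<lambda>(s,k). v (take k (rotate s w)) * u (drop k (rotate s w))) a"
      using eq[OF hS[OF a]] hh[OF a] by simp
  next
    fix b assume b: "b \<in> S"
    show "h (h b) = b" "h b \<in> S" using hh[OF b] hS[OF b] by auto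
  qed
  then show ?thesis
    by (simp add: rotsum_def sum_subtractf n_def[symmetric] lhs rhs)
qed

lemma rotsum_commsp: "x \<in> commsp \<Longrightarrow> rotsum x w = 0"
  unfolding commsp_def
proof (induction x rule: kspan.induct)
  case zero then show ?case by (simp add: rotsum_def)
next
  case (add x y c)
  then obtain u v where "x = (\<lambda>w. tmul u v w - tmul v u w)" by auto
  then have "rotsum x w = 0" using rotsum_comm by simp
  then show ?case using add.IH
    by (simp add: rotsum_def sum.distrib sum_distrib_left[symmetric])
qed

definition W :: "nat \<Rightarrow> ('i \<times> bool) list set" where
  "W n = {w. length w = n}"

lemma finite_W: "finite (W n :: ('i::finite \<times> bool) list set)"
proof -
  have "W n = {xs :: ('i \<times> bool) list. set xs \<subseteq> UNIV \<and> length xs = n}" by (auto simp: W_def)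
  then show ?thesis using finite_lists_length_eq[of "UNIV :: ('i \<times> bool) set" n] by simp
qed

lemma sum_omega:
  "(\<Sum>p\<in>W 2. (omega0 p :: 'k::comm_ring_1) * f p)
   = (\<Sum>i\<in>(UNIV :: 'i::finite set). f [(i,True),(i,False)] - f [(i,False),(i,True)])"
proof -
  define S1 where "S1 = (\<lambda>i::'i. [(i,True),(i,False)]) ` UNIV"
  define S2 where "S2 = (\<lambda>i::'i. [(i,False),(i,True)]) ` UNIV"
  have sub: "S1 \<union> S2 \<subseteq> W 2" by (auto simp: S1_def S2_def W_def)
  have z: "\<forall>p\<in>W 2 - (S1 \<union> S2). (omega0 p :: 'k) * f p = 0"
    by (auto simp: S1_def S2_def omega0_def)
  have "(\<Sum>p\<in>W 2. (omega0 p :: 'k) * f p) = (\<Sum>p\<in>S1 \<union> S2. omega0 p * f p)"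
    by (rule sum.mono_neutral_right[OF finite_W sub z])
  also have "\<dots> = (\<Sum>p\<in>S1. omega0 p * f p) + (\<Sum>p\<in>S2. omega0 p * f p)"
    by (rule sum.union_disjoint) (auto simp: S1_def S2_def)
  also have "(\<Sum>p\<in>S1. (omega0 p :: 'k) * f p) = (\<Sum>i\<in>UNIV. f [(i,True),(i,False)])"
    unfolding S1_def by (subst sum.reindex) (auto simp: inj_def omega0_def)
  also have "(\<Sum>p\<in>S2. (omega0 p :: 'k) * f p) = (\<Sum>i\<in>UNIV. - f [(i,False),(i,True)])"
    unfolding S2_def by (subst sum.reindex) (auto simp: inj_def omega0_def)
  finally show ?thesis by (simp add: sum_subtractf sum_negf)
qed

lemma sum_omega_sq:
  "(\<Sum>p\<in>(W 2 :: ('i::finite \<times> bool) list set). (omega0 p :: 'k::comm_ring_1) * omega0 p) = of_nat (2 * card (UNIV :: 'i set))"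
  by (subst sum_omega) (simp add: omega0_def)

lemma sum_omega_Cpair: "(\<Sum>p\<in>W 2. omega0 p * q p) = Cpair q"
  by (simp add: sum_omega Cpair_def)


definition Pm :: "('i::finite \<times> bool) list \<Rightarrow> ('i \<times> bool) list \<Rightarrow> 'k::field_char_0" where
  "Pm x y = (if x = y then 1 else 0) - omega0 x * omega0 y / of_nat (2 * card (UNIV :: 'i set))"

lemma Gc_nz: "(of_nat (2 * card (UNIV :: 'i::finite set)) :: 'k::field_char_0) \<noteq> 0"
  by (simp add: card_gt_0_iff)

lemma projsum:
  fixes f :: "('i::finite \<times> bool) list \<Rightarrow> 'k::field_char_0"
  assumes "u \<in> W 2"
  shows "(\<Sum>p\<in>W 2. Pm u p * f p) = f u - omega0 u / of_nat (2 * card (UNIV :: 'i set)) * (\<Sum>p\<in>W 2. omega0 p * f p)"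
proof -
  have "(\<Sum>p\<in>W 2. Pm u p * f p) = (\<Sum>p\<in>W 2. (if u = p then f p else 0)) - (\<Sum>p\<in>W 2. omega0 u / of_nat (2 * card (UNIV :: 'i set)) * (omega0 p * f p))"
  proof -
    have "\<And>p. Pm u p * f p = (if u = p then f p else 0) - omega0 u / of_nat (2 * card (UNIV :: 'i set)) * (omega0 p * f p)"
      by (simp add: Pm_def left_diff_distrib)
    then show ?thesis by (simp add: sum_subtractf)
  qed
  also have "\<dots> = f u - omega0 u / of_nat (2 * card (UNIV :: 'i set)) * (\<Sum>p\<in>W 2. omega0 p * f p)"
    using assms by (simp add: sum.delta finite_W sum_distrib_left)
  finally show ?thesis .
qed

lemma killsum:
  assumes "u \<in> W 2"
  shows "(\<Sum>p\<in>W 2. Pm u p * omega0 p) = (0 :: 'k::field_char_0)"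
  using projsum[OF assms, of omega0] Gc_nz
  by (simp add: sum_omega_sq)

lemma kill1:
  fixes G :: "('i::finite \<times> bool) list \<Rightarrow> ('i \<times> bool) list \<Rightarrow> 'k::field_char_0"
  assumes "u1 \<in> W 2" "\<And>p1 p2. p1 \<in> W 2 \<Longrightarrow> p2 \<in> W 2 \<Longrightarrow> G p1 p2 = omega0 p1 * H p2"
  shows "(\<Sum>p1\<in>W 2. \<Sum>p2\<in>W 2. Pm u1 p1 * Pm u2 p2 * G p1 p2) = 0"
proof -
  have "(\<Sum>p1\<in>W 2. \<Sum>p2\<in>W 2. Pm u1 p1 * Pm u2 p2 * G p1 p2)
      = (\<Sum>p1\<in>W 2. Pm u1 p1 * omega0 p1 * (\<Sum>p2\<in>W 2. Pm u2 p2 * H p2))"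
    by (rule sum.cong[OF refl], simp add: sum_distrib_left assms(2) algebra_simps)
  also have "\<dots> = (\<Sum>p1\<in>W 2. Pm u1 p1 * omega0 p1) * (\<Sum>p2\<in>W 2. Pm u2 p2 * H p2)"
    by (simp add: sum_distrib_right)
  also have "\<dots> = 0" by (simp add: killsum[OF assms(1)])
  finally show ?thesis .
qed

lemma kill2:
  fixes G :: "('i::finite \<times> bool) list \<Rightarrow> ('i \<times> bool) list \<Rightarrow> 'k::field_char_0"
  assumes "u2 \<in> W 2" "\<And>p1 p2. p1 \<in> W 2 \<Longrightarrow> p2 \<in> W 2 \<Longrightarrow> G p1 p2 = H p1 * omega0 p2"
  shows "(\<Sum>p1\<in>W 2. \<Sum>p2\<in>W 2. Pm u1 p1 * Pm u2 p2 * G p1 p2) = 0"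
proof -
  have "(\<Sum>p1\<in>W 2. \<Sum>p2\<in>W 2. Pm u1 p1 * Pm u2 p2 * G p1 p2)
      = (\<Sum>p1\<in>W 2. Pm u1 p1 * H p1 * (\<Sum>p2\<in>W 2. Pm u2 p2 * omega0 p2))"
    by (rule sum.cong[OF refl], simp add: sum_distrib_left assms(2) algebra_simps)
  also have "\<dots> = 0" by (simp add: killsum[OF assms(1)] sum_distrib_left[symmetric])
  finally show ?thesis .
qed

definition QP :: "nat \<Rightarrow> ('i::finite, 'k::comm_ring_1) tens \<Rightarrow> bool" where
  "QP m x \<longleftrightarrow> x \<in> hom m \<and>
     (\<forall>mid p2. length p2 = 2 \<longrightarrow> (\<Sum>p\<in>W 2. omega0 p * x (p @ mid @ p2)) = 0) \<and>
     (\<forall>p1 mid. length p1 = 2 \<longrightarrow> (\<Sum>p\<in>W 2. omega0 p * x (p1 @ mid @ p)) = 0)"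

lemma QVQ_QP:
  assumes "m \<ge> 4" "a \<in> QVQ m"
  shows "QP m a"
  using assms(2) unfolding QVQ_def
proof (induction a rule: kspan.induct)
  case zero
  then show ?case by (simp add: QP_def hom_def)
next
  case (add x y c)
  from add.hyps obtain q v q' where x: "x = tmul (tmul q v) q'" "q \<in> Qsp" "v \<in> hom (m - 4)" "q' \<in> Qsp"
    by auto
  have hq: "q \<in> hom 2" "q' \<in> hom 2" using x by (auto simp: Qsp_def)
  have hx: "x \<in> hom m"
  proof -
    have "tmul (tmul q v) q' \<in> hom (2 + (m - 4) + 2)" by (intro tmul_hom hq x(3))
    moreover have "2 + (m - 4) + 2 = m" using assms(1) by simp
    ultimately show ?thesis using x by simp
  qed
  have val: "x (p1 @ mid @ p2) = q p1 * v mid * q' p2" if "length p1 = 2" "length p2 = 2" for p1 mid p2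
    using that by (simp add: x(1) tmul_right[OF hq(2)] tmul_left[OF hq(1)])
  have c1: "Cpair q = 0" "Cpair q' = 0" using x by (auto simp: Qsp_def)
  have s1: "(\<Sum>p\<in>W 2. omega0 p * x (p @ mid @ p2)) = 0" if "length p2 = 2" for mid p2
  proof -
    have "(\<Sum>p\<in>W 2. omega0 p * x (p @ mid @ p2)) = (\<Sum>p\<in>W 2. omega0 p * q p * (v mid * q' p2))"
      by (rule sum.cong) (auto simp: W_def val that)
    also have "\<dots> = (\<Sum>p\<in>W 2. omega0 p * q p) * (v mid * q' p2)"
      by (simp add: sum_distrib_right)
    finally have "(\<Sum>p\<in>W 2. omega0 p * x (p @ mid @ p2)) = (\<Sum>p\<in>W 2. omega0 p * q p) * (v mid * q' p2)" .
    then show ?thesis by (simp add: sum_omega_Cpair c1)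
  qed
  have s2: "(\<Sum>p\<in>W 2. omega0 p * x (p1 @ mid @ p)) = 0" if "length p1 = 2" for mid p1
  proof -
    have "(\<Sum>p\<in>W 2. omega0 p * x (p1 @ mid @ p)) = (\<Sum>p\<in>W 2. omega0 p * q' p * (q p1 * v mid))"
      by (rule sum.cong) (auto simp: W_def val that algebra_simps)
    also have "\<dots> = (\<Sum>p\<in>W 2. omega0 p * q' p) * (q p1 * v mid)"
      by (simp add: sum_distrib_right)
    finally have "(\<Sum>p\<in>W 2. omega0 p * x (p1 @ mid @ p)) = (\<Sum>p\<in>W 2. omega0 p * q' p) * (q p1 * v mid)" .
    then show ?thesis by (simp add: sum_omega_Cpair c1)
  qed
  show ?case using add.IH hx s1 s2
    by (auto simp: QP_def hom_def sum.distrib sum_distrib_left[symmetric] algebra_simps)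
qed

definition rl :: "nat \<Rightarrow> 'i \<times> bool" where
  "rl j = (undefined, j mod 4 = 0 \<or> j mod 4 = 3)"

definition Rw :: "nat \<Rightarrow> ('i \<times> bool) list" where
  "Rw k = map rl [0..<4*k]"

lemma len_Rw[simp]: "length (Rw k) = 4 * k" by (simp add: Rw_def)

lemma nb: "odd j \<Longrightarrow> (omega0 [rl j, rl (Suc j)] :: 'k::comm_ring_1) = 0"
proof -
  assume "odd j"
  then have "j mod 4 = 1 \<or> j mod 4 = 3" by presburger
  moreover have "Suc j mod 4 = 2" if "j mod 4 = 1" using that by presburger
  moreover have "Suc j mod 4 = 0" if "j mod 4 = 3" using that by presburger
  ultimately show ?thesis by (auto simp: rl_def omega0_def)
qed

lemma Om_Rw: "(Om (Rw k :: ('i::finite \<times> bool) list) :: 'k::comm_ring_1) = (-1) ^ k"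
proof (induction k)
  case 0 then show ?case by (simp add: Rw_def)
next
  case (Suc k)
  have "Rw (Suc k) = (Rw k :: ('i \<times> bool) list) @ [rl (4*k), rl (4*k+1), rl (4*k+2), rl (4*k+3)]"
    by (simp add: Rw_def numeral_eq_Suc)
  moreover have "rl (4*k) = ((undefined::'i), True)" "rl (4*k+1) = ((undefined::'i), False)"
    "rl (4*k+2) = ((undefined::'i), False)" "rl (4*k+3) = ((undefined::'i), True)"
  proof -
    have "(4*k+1) mod 4 = (1::nat)" "(4*k+2) mod 4 = (2::nat)" "(4*k+3) mod 4 = (3::nat)" by presburger+
    then show "rl (4*k) = ((undefined::'i), True)" "rl (4*k+1) = ((undefined::'i), False)"
    "rl (4*k+2) = ((undefined::'i), False)" "rl (4*k+3) = ((undefined::'i), True)"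
      by (simp_all add: rl_def)
  qed
  ultimately have "(Om (Rw (Suc k) :: ('i \<times> bool) list) :: 'k) = Om (Rw k :: ('i \<times> bool) list) * (1 * (-1 * 1))"
    by (simp add: Om_append omega0_def)
  then show ?case using Suc.IH by simp
qed

lemma drop_Rw: "s \<le> 4 * k \<Longrightarrow> drop s (Rw k) = map rl [s..<4*k]"
  by (simp add: Rw_def drop_map)

lemma take_Rw: "t \<le> 4 * k \<Longrightarrow> take t (Rw k) = map rl [0..<t]"
  by (simp add: Rw_def take_map)

lemma Zdrop:
  assumes "odd s" "s + 2 \<le> 4 * k"
  shows "(Om (drop s (Rw k :: ('i::finite \<times> bool) list) @ Y) :: 'k::comm_ring_1) = 0"
proof -
  have "[s..<4*k] = s # Suc s # [s+2..<4*k]" using assms by (simp add: upt_conv_Cons)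
  then have "drop s (Rw k :: ('i \<times> bool) list) = rl s # rl (Suc s) # map rl [s+2..<4*k]"
    using assms by (simp add: drop_Rw)
  moreover have "(omega0 [rl s :: 'i \<times> bool, rl (Suc s)] :: 'k) = 0" by (rule nb) (fact assms(1))
  ultimately show ?thesis by simp
qed

lemma Zodd:
  assumes "odd (length Y)" "3 \<le> t" "t \<le> 4 * k"
  shows "(Om (Y @ take t (Rw k :: ('i::finite \<times> bool) list)) :: 'k::comm_ring_1) = 0"
proof -
  have "[0..<t] = 0 # 1 # 2 # [3..<t]" using assms by (simp add: upt_conv_Cons eval_nat_numeral)
  then have "take t (Rw k :: ('i \<times> bool) list) = rl 0 # rl 1 # rl 2 # map rl [3..<t]"
    using assms by (simp add: take_Rw)
  then have "Y @ take t (Rw k :: ('i \<times> bool) list) = (Y @ [rl 0]) @ rl 1 # rl (Suc 1) # map rl [3..<t]"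
    by (simp add: numeral_2_eq_2)
  moreover have "(omega0 [rl 1 :: 'i \<times> bool, rl (Suc 1)] :: 'k) = 0" by (rule nb) simp
  ultimately show ?thesis using assms(1) by (simp only:) (rule Om_zero, simp_all)
qed

lemma rot_eq: "s < length w \<Longrightarrow> rotate s w = drop s w @ take s w"
  by (simp add: rotate_drop_take)

lemma rot_small:
  assumes "length u = M" "length R = N" "K + s \<le> M + N" "K \<le> M" "s < M + N" "M \<le> K + s"
  shows "take K (rotate s (u @ R)) = take K (drop s (u @ R))"
    "drop K (rotate s (u @ R)) = drop (K + s - M) R @ take s (u @ R)"
proof -
  have r: "rotate s (u @ R) = drop s (u @ R) @ take s (u @ R)" using assms by (intro rot_eq) simp
  have l: "length (drop s (u @ R)) = M + N - s" using assms by simp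
  show "take K (rotate s (u @ R)) = take K (drop s (u @ R))" using assms l r by simp
  have "drop K (rotate s (u @ R)) = drop K (drop s (u @ R)) @ take s (u @ R)" using assms l r by simp
  also have "drop K (drop s (u @ R)) = drop (K + s) (u @ R)" by (simp only: drop_drop add.commute)
  also have "\<dots> = drop (K + s - M) R" using assms by simp
  finally show "drop K (rotate s (u @ R)) = drop (K + s - M) R @ take s (u @ R)" .
qed

lemma rot_big:
  assumes "length u = M" "length R = N" "M \<le> s" "s < M + N" "M + N - s \<le> K" "K \<le> M"
  shows "take K (rotate s (u @ R)) = drop (s - M) R @ take (K + s - M - N) u"
    "drop K (rotate s (u @ R)) = drop (K + s - M - N) u @ take (s - M) R"
proof -
  have r: "rotate s (u @ R) = drop (s - M) R @ u @ take (s - M) R" using assms by (simp add: rot_eq)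
  have l: "length (drop (s - M) R) = M + N - s" using assms by simp
  have "K - (M + N - s) \<le> M" using assms by simp
  then show "take K (rotate s (u @ R)) = drop (s - M) R @ take (K + s - M - N) u"
    "drop K (rotate s (u @ R)) = drop (K + s - M - N) u @ take (s - M) R"
    using assms l r by (simp_all add: take_append drop_append)
qed

lemma Zodd2:
  assumes "odd (length Y)" "3 \<le> t" "t \<le> 4 * k"
  shows "(Om (Y @ take t (Rw k :: ('i::finite \<times> bool) list) @ Z) :: 'k::comm_ring_1) = 0"
proof -
  have "[0..<t] = 0 # 1 # 2 # [3..<t]" using assms by (simp add: upt_conv_Cons eval_nat_numeral)
  then have "take t (Rw k :: ('i \<times> bool) list) = rl 0 # rl 1 # rl 2 # map rl [3..<t]"
    using assms by (simp add: take_Rw)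
  then have "Y @ take t (Rw k :: ('i \<times> bool) list) @ Z = (Y @ [rl 0]) @ rl 1 # rl (Suc 1) # (map rl [3..<t] @ Z)"
    by (simp add: numeral_2_eq_2)
  moreover have "(omega0 [rl 1 :: 'i \<times> bool, rl (Suc 1)] :: 'k) = 0" by (rule nb) simp
  ultimately show ?thesis using assms(1) by (simp only:) (rule Om_zero, simp_all)
qed

lemma SS_zero:
  assumes "\<And>p1 p2. p1 \<in> W 2 \<Longrightarrow> p2 \<in> W 2 \<Longrightarrow> G p1 p2 = 0"
  shows "(\<Sum>p1\<in>W 2. \<Sum>p2\<in>W 2. Pm u1 p1 * Pm u2 p2 * G p1 p2) = (0::'k::field_char_0)"
  using assms by simp

lemma GenTail:
  fixes G :: "('i::finite \<times> bool) list \<Rightarrow> ('i \<times> bool) list \<Rightarrow> 'k::field_char_0"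
  assumes "u2 \<in> W 2" "length mid = h" "j \<le> h + 3" "3 \<le> t" "t \<le> 4 * k"
    "\<And>p1 p2. p1 \<in> W 2 \<Longrightarrow> p2 \<in> W 2 \<Longrightarrow>
       G p1 p2 = g (take j (p1 @ mid @ p2)) * Om (drop j (p1 @ mid @ p2) @ take t (Rw k))"
  shows "(\<Sum>p1\<in>W 2. \<Sum>p2\<in>W 2. Pm u1 p1 * Pm u2 p2 * G p1 p2) = 0"
proof (cases "even (h + 4 - j)")
  case True
  then have j: "j \<le> h + 2" using assms(3) by presburger
  show ?thesis
  proof (rule kill2[OF assms(1)])
    fix p1 p2 :: "('i \<times> bool) list" assume p: "p1 \<in> W 2" "p2 \<in> W 2"
    then have lp: "length p1 = 2" "length p2 = 2" by (auto simp: W_def)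
    have e1: "take j (p1 @ mid @ p2) = take j (p1 @ mid)" using lp j assms(2) by simp
    have e2: "drop j (p1 @ mid @ p2) = drop j (p1 @ mid) @ p2" using lp j assms(2) by simp
    have G: "G p1 p2 = g (take j (p1 @ mid)) * Om (drop j (p1 @ mid) @ p2 @ take t (Rw k))"
      using assms(6)[OF p] unfolding e1 e2 append_assoc .
    have omeq: "Om (drop j (p1 @ mid) @ p2 @ take t (Rw k)) = Om (drop j (p1 @ mid)) * (omega0 p2 :: 'k) * Om (take t (Rw k :: ('i \<times> bool) list))"
    proof (rule Om_kill)
      have "length (drop j (p1 @ mid)) = h + 2 - j" using lp assms(2) by simp
      moreover have "even (h + 2 - j)" using True j by presburger
      ultimately show "even (length (drop j (p1 @ mid)))" by simp
    qed (use lp in auto)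
    then show "G p1 p2 = (g (take j (p1 @ mid)) * Om (drop j (p1 @ mid)) * Om (take t (Rw k :: ('i \<times> bool) list))) * omega0 p2"
      unfolding G omeq by (simp only: mult_ac)
  qed
next
  case False
  show ?thesis
  proof (rule SS_zero)
    fix p1 p2 :: "('i \<times> bool) list" assume p: "p1 \<in> W 2" "p2 \<in> W 2"
    then have lp: "length p1 = 2" "length p2 = 2" by (auto simp: W_def)
    have "length (drop j (p1 @ mid @ p2)) = h + 4 - j" using lp assms(2) by simp
    then have "odd (length (drop j (p1 @ mid @ p2)))" using False by simp
    then have "(Om (drop j (p1 @ mid @ p2) @ take t (Rw k :: ('i \<times> bool) list) @ []) :: 'k) = 0"
      by (rule Zodd2) (use assms in auto)
    then show "G p1 p2 = 0" using assms(6)[OF p] by simp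
  qed
qed

lemma GenHead:
  fixes G :: "('i::finite \<times> bool) list \<Rightarrow> ('i \<times> bool) list \<Rightarrow> 'k::field_char_0"
  assumes "u2 \<in> W 2" "length mid = h" "3 \<le> t" "t \<le> 4 * k"
    "\<And>p1 p2. p1 \<in> W 2 \<Longrightarrow> p2 \<in> W 2 \<Longrightarrow>
       G p1 p2 = c * Om (x # p1 @ mid @ p2 @ take t (Rw k))"
  shows "(\<Sum>p1\<in>W 2. \<Sum>p2\<in>W 2. Pm u1 p1 * Pm u2 p2 * G p1 p2) = 0"
proof (cases "odd h")
  case True
  show ?thesis
  proof (rule kill2[OF assms(1)])
    fix p1 p2 :: "('i \<times> bool) list" assume p: "p1 \<in> W 2" "p2 \<in> W 2"
    then have lp: "length p1 = 2" "length p2 = 2" by (auto simp: W_def)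
    have "Om ((x # p1 @ mid) @ p2 @ take t (Rw k)) = Om (x # p1 @ mid) * (omega0 p2 :: 'k) * Om (take t (Rw k :: ('i \<times> bool) list))"
      by (rule Om_kill) (use lp assms(2) True in auto)
    then show "G p1 p2 = (c * Om (x # p1 @ mid) * Om (take t (Rw k :: ('i \<times> bool) list))) * omega0 p2"
      using assms(5)[OF p] by (simp add: algebra_simps)
  qed
next
  case False
  show ?thesis
  proof (rule SS_zero)
    fix p1 p2 :: "('i \<times> bool) list" assume p: "p1 \<in> W 2" "p2 \<in> W 2"
    then have lp: "length p1 = 2" "length p2 = 2" by (auto simp: W_def)
    have "odd (length (x # p1 @ mid @ p2))" using lp False assms(2) by simp
    then have "(Om ((x # p1 @ mid @ p2) @ take t (Rw k :: ('i \<times> bool) list) @ []) :: 'k) = 0"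
      by (rule Zodd2) (use assms in auto)
    then show "G p1 p2 = 0" using assms(5)[OF p] by simp
  qed
qed

lemma drop_app_ge: "length u \<le> s \<Longrightarrow> drop s (u @ R) = drop (s - length u) R" by simp

lemma take_app_ge: "length u \<le> s \<Longrightarrow> take s (u @ R) = u @ take (s - length u) R" by simp

lemma SA_zero:
  fixes f :: "('i::finite \<times> bool) list \<Rightarrow> 'k::field_char_0"
  assumes u: "u1 \<in> W 2" "u2 \<in> W 2" and lm: "length mid = h" and kk: "h + 10 \<le> 4 * k"
    and s: "0 < s" "s < h + 4 + 4 * k"
  shows "(\<Sum>p1\<in>W 2. \<Sum>p2\<in>W 2. Pm u1 p1 * Pm u2 p2 *
     (f (take (h + 4) (rotate s (p1 @ mid @ p2 @ Rw k))) * Om (drop (h + 4) (rotate s (p1 @ mid @ p2 @ Rw k))))) = 0"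
proof -
  have rs: "take (h + 4) (rotate s (p1 @ mid @ p2 @ Rw k)) = take (h + 4) (drop s (p1 @ mid @ p2 @ Rw k))"
    "drop (h + 4) (rotate s (p1 @ mid @ p2 @ Rw k)) = drop s (Rw k) @ take s (p1 @ mid @ p2 @ Rw k)"
    if "s \<le> 4 * k" "p1 \<in> W 2" "p2 \<in> W 2" for p1 p2 :: "('i \<times> bool) list"
    using rot_small[of "p1 @ mid @ p2" "h + 4" "Rw k" "4 * k" "h + 4" s] that lm
    by (auto simp: W_def)
  consider (c1) "even s" "s \<le> 4 * k" | (c2) "odd s" "s + 2 \<le> 4 * k" | (c3) "s = 4 * k - 1"
    | (c4) "4 * k < s"
  proof -
    fix thesis
    assume h1: "even s \<Longrightarrow> s \<le> 4 * k \<Longrightarrow> thesis" and h2: "odd s \<Longrightarrow> s + 2 \<le> 4 * k \<Longrightarrow> thesis"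
      and h3: "s = 4 * k - 1 \<Longrightarrow> thesis" and h4: "4 * k < s \<Longrightarrow> thesis"
    show thesis
    proof (cases "4 * k < s")
      case True then show ?thesis by (rule h4)
    next
      case False
      show ?thesis
      proof (cases "even s")
        case True then show ?thesis using False h1 by simp
      next
        case odd: False
        show ?thesis
        proof (cases "s + 2 \<le> 4 * k")
          case True then show ?thesis using odd h2 by simp
        next
          case False
          then have "s = 4 * k - 1" using odd \<open>\<not> 4 * k < s\<close> by presburger
          then show ?thesis by (rule h3)
        qed
      qed
    qed
  qed
  then show ?thesis
  proof cases
    case c1
    show ?thesis
    proof (rule kill1[OF u(1)])
      fix p1 p2 :: "('i \<times> bool) list" assume p: "p1 \<in> W 2" "p2 \<in> W 2"
      then have lp: "length p1 = 2" "length p2 = 2" by (auto simp: W_def)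
      have s2: "2 \<le> s" using c1 s by presburger
      have d: "drop s (p1 @ mid @ p2 @ Rw k) = drop (s - 2) (mid @ p2 @ Rw k)" using lp s2 by simp
      have t: "take s (p1 @ mid @ p2 @ Rw k) = p1 @ take (s - 2) (mid @ p2 @ Rw k)" using lp s2 by simp
      have omeq: "Om (drop s (Rw k) @ p1 @ take (s - 2) (mid @ p2 @ Rw k)) = Om (drop s (Rw k :: ('i \<times> bool) list)) * (omega0 p1 :: 'k) * Om (take (s - 2) (mid @ p2 @ Rw k))"
        by (rule Om_kill) (use lp c1 in auto)
      show "f (take (h + 4) (rotate s (p1 @ mid @ p2 @ Rw k))) * Om (drop (h + 4) (rotate s (p1 @ mid @ p2 @ Rw k)))
          = omega0 p1 * (f (take (h + 4) (drop (s - 2) (mid @ p2 @ Rw k))) * Om (drop s (Rw k :: ('i \<times> bool) list)) * Om (take (s - 2) (mid @ p2 @ Rw k)))"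
        unfolding rs[OF c1(2) p] d t omeq by (simp only: mult_ac)
    qed
  next
    case c2
    show ?thesis
    proof (rule SS_zero)
      fix p1 p2 :: "('i \<times> bool) list" assume p: "p1 \<in> W 2" "p2 \<in> W 2"
      have "(Om (drop s (Rw k :: ('i \<times> bool) list) @ take s (p1 @ mid @ p2 @ Rw k)) :: 'k) = 0"
        by (rule Zdrop) (use c2 in auto)
      then show "f (take (h + 4) (rotate s (p1 @ mid @ p2 @ Rw k))) * Om (drop (h + 4) (rotate s (p1 @ mid @ p2 @ Rw k))) = 0"
        using c2 p by (simp add: rs)
    qed
  next
    case c3
    have sk: "s \<le> 4 * k" "h + 4 \<le> s" using c3 kk by auto
    have dr: "drop s (Rw k :: ('i \<times> bool) list) = [rl (4 * k - 1)]"
      using c3 kk by (simp add: drop_Rw upt_conv_Cons)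
    show ?thesis
    proof (rule GenHead[OF u(2) lm, where t = "s - (h + 4)" and k = k and x = "rl (4 * k - 1)"
          and c = "f (take (h + 4) (drop (s - (h + 4)) (Rw k)))"])
      show "3 \<le> s - (h + 4)" "s - (h + 4) \<le> 4 * k" using c3 kk by auto
      fix p1 p2 :: "('i \<times> bool) list" assume p: "p1 \<in> W 2" "p2 \<in> W 2"
      then have lp: "length p1 = 2" "length p2 = 2" by (auto simp: W_def)
      have lu: "length (p1 @ mid @ p2) = h + 4" using lp lm by simp
      have d: "drop s (p1 @ mid @ p2 @ Rw k) = drop (s - (h + 4)) (Rw k)"
        using drop_app_ge[of "p1 @ mid @ p2" s "Rw k"] lu sk by simp
      have t: "take s (p1 @ mid @ p2 @ Rw k) = p1 @ mid @ p2 @ take (s - (h + 4)) (Rw k)"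
        using take_app_ge[of "p1 @ mid @ p2" s "Rw k"] lu sk by simp
      show "f (take (h + 4) (rotate s (p1 @ mid @ p2 @ Rw k))) * Om (drop (h + 4) (rotate s (p1 @ mid @ p2 @ Rw k)))
        = f (take (h + 4) (drop (s - (h + 4)) (Rw k))) * Om (rl (4 * k - 1) # p1 @ mid @ p2 @ take (s - (h + 4)) (Rw k))"
        unfolding rs[OF sk(1) p] d t dr by simp
    qed
  next
    case c4
    have rb: "take (h + 4) (rotate s ((p1 @ mid @ p2) @ Rw k)) = drop (s - (h + 4)) (Rw k) @ take (s - 4 * k) (p1 @ mid @ p2)"
      "drop (h + 4) (rotate s ((p1 @ mid @ p2) @ Rw k)) = drop (s - 4 * k) (p1 @ mid @ p2) @ take (s - (h + 4)) (Rw k)"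
      if "p1 \<in> W 2" "p2 \<in> W 2" for p1 p2 :: "('i \<times> bool) list"
      using rot_big[of "p1 @ mid @ p2" "h + 4" "Rw k" "4 * k" s "h + 4"] that lm c4 s kk
      by (auto simp: W_def)
    show ?thesis
    proof (rule GenTail[OF u(2) lm, where j = "s - 4 * k" and t = "s - (h + 4)" and k = k
          and g = "\<lambda>x. f (drop (s - (h + 4)) (Rw k) @ x)"])
      show "s - 4 * k \<le> h + 3" "3 \<le> s - (h + 4)" "s - (h + 4) \<le> 4 * k" using c4 s kk by auto
      fix p1 p2 :: "('i \<times> bool) list" assume p: "p1 \<in> W 2" "p2 \<in> W 2"
      show "f (take (h + 4) (rotate s (p1 @ mid @ p2 @ Rw k))) * Om (drop (h + 4) (rotate s (p1 @ mid @ p2 @ Rw k)))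
        = f (drop (s - (h + 4)) (Rw k) @ take (s - 4 * k) (p1 @ mid @ p2)) * Om (drop (s - 4 * k) (p1 @ mid @ p2) @ take (s - (h + 4)) (Rw k))"
        using rb[OF p] by simp
    qed
  qed
qed

lemma W2_obtain: "p \<in> W 2 \<Longrightarrow> \<exists>x y. p = [x, y]"
  unfolding W_def by (auto simp: length_Suc_conv numeral_2_eq_2)

lemma SB_zero:
  fixes f :: "('i::finite \<times> bool) list \<Rightarrow> 'k::field_char_0"
  assumes u: "u1 \<in> W 2" "u2 \<in> W 2" and lm: "length mid = h" and kk: "h + 10 \<le> 4 * k"
    and s: "s < h + 4 + 4 * k"
  shows "(\<Sum>p1\<in>W 2. \<Sum>p2\<in>W 2. Pm u1 p1 * Pm u2 p2 *
     (f (take (h + 2) (rotate s (p1 @ mid @ p2 @ Rw k))) * Om (drop (h + 2) (rotate s (p1 @ mid @ p2 @ Rw k))))) = 0"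
proof -
  have rs: "take (h + 2) (rotate s (p1 @ mid @ p2 @ Rw k)) = take (h + 2) (drop s (p1 @ mid @ p2 @ Rw k))"
    "drop (h + 2) (rotate s (p1 @ mid @ p2 @ Rw k)) = drop (s - 2) (Rw k) @ take s (p1 @ mid @ p2 @ Rw k)"
    if "2 \<le> s" "s \<le> 4 * k + 2" "p1 \<in> W 2" "p2 \<in> W 2" for p1 p2 :: "('i \<times> bool) list"
    using rot_small[of "p1 @ mid @ p2" "h + 4" "Rw k" "4 * k" "h + 2" s] that lm s
    by (auto simp: W_def)
  consider (b0) "s = 0" | (b1) "s = 1" | (b2) "even s" "2 \<le> s" "s \<le> 4 * k + 2"
    | (b3) "odd s" "3 \<le> s" "s + 1 \<le> 4 * k" | (b4) "s = 4 * k + 1" | (b5) "4 * k + 3 \<le> s"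
  proof -
    fix thesis
    assume h0: "s = 0 \<Longrightarrow> thesis" and h1: "s = 1 \<Longrightarrow> thesis"
      and h2: "even s \<Longrightarrow> 2 \<le> s \<Longrightarrow> s \<le> 4 * k + 2 \<Longrightarrow> thesis"
      and h3: "odd s \<Longrightarrow> 3 \<le> s \<Longrightarrow> s + 1 \<le> 4 * k \<Longrightarrow> thesis"
      and h4: "s = 4 * k + 1 \<Longrightarrow> thesis" and h5: "4 * k + 3 \<le> s \<Longrightarrow> thesis"
    show thesis
    proof (cases "4 * k + 3 \<le> s")
      case True then show ?thesis by (rule h5)
    next
      case F: False
      show ?thesis
      proof (cases "s \<le> 1")
        case True then show ?thesis using h0 h1 by (cases s) auto
      next
        case F2: False
        show ?thesis
        proof (cases "even s")
          case True
          have "s \<le> 4 * k + 2" using F by simp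
          then show ?thesis using True F2 h2 by simp
        next
          case odd: False
          show ?thesis
          proof (cases "s = 4 * k + 1")
            case True then show ?thesis by (rule h4)
          next
            case False
            then have "s + 1 \<le> 4 * k" "3 \<le> s" using odd F F2 by presburger+
            then show ?thesis using odd h3 by simp
          qed
        qed
      qed
    qed
  qed
  then show ?thesis
  proof cases
    case b0
    show ?thesis
    proof (rule kill2[OF u(2)])
      fix p1 p2 :: "('i \<times> bool) list" assume p: "p1 \<in> W 2" "p2 \<in> W 2"
      obtain a b where pa: "p1 = [a, b]" using W2_obtain[OF p(1)] by blast
      obtain x y where px: "p2 = [x, y]" using W2_obtain[OF p(2)] by blast
      have t: "take (h + 2) (p1 @ mid @ p2 @ Rw k) = p1 @ mid" using pa lm by simp
      have d: "drop (h + 2) (p1 @ mid @ p2 @ Rw k) = p2 @ Rw k" using pa lm by simp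
      have omeq: "Om (p2 @ Rw k) = (omega0 p2 :: 'k) * Om (Rw k :: ('i \<times> bool) list)"
        using px by simp
      show "f (take (h + 2) (rotate s (p1 @ mid @ p2 @ Rw k))) * Om (drop (h + 2) (rotate s (p1 @ mid @ p2 @ Rw k)))
          = (f (p1 @ mid) * Om (Rw k :: ('i \<times> bool) list)) * omega0 p2"
        by (simp only: b0 rotate0 id_apply t d omeq mult_ac)
    qed
  next
    case b1
    show ?thesis
    proof (rule SS_zero)
      fix p1 p2 :: "('i \<times> bool) list" assume p: "p1 \<in> W 2" "p2 \<in> W 2"
      obtain a b where pa: "p1 = [a, b]" using W2_obtain[OF p(1)] by blast
      obtain x y where px: "p2 = [x, y]" using W2_obtain[OF p(2)] by blast
      have r: "rotate1 (p1 @ mid @ p2 @ Rw k) = (b # mid @ p2 @ Rw k) @ [a]"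
        by (simp add: pa)
      have d: "drop (h + 2) (rotate s (p1 @ mid @ p2 @ Rw k)) = [y] @ take (4 * k) (Rw k) @ [a]"
        using lm by (simp add: b1 pa px)
      have "(Om ([y] @ take (4 * k) (Rw k :: ('i \<times> bool) list) @ [a]) :: 'k) = 0"
        by (rule Zodd2) (use kk in auto)
      then show "f (take (h + 2) (rotate s (p1 @ mid @ p2 @ Rw k))) * Om (drop (h + 2) (rotate s (p1 @ mid @ p2 @ Rw k))) = 0"
        by (simp only: d) simp
    qed
  next
    case b2
    show ?thesis
    proof (rule kill1[OF u(1)])
      fix p1 p2 :: "('i \<times> bool) list" assume p: "p1 \<in> W 2" "p2 \<in> W 2"
      then have lp: "length p1 = 2" "length p2 = 2" by (auto simp: W_def)
      have d: "drop s (p1 @ mid @ p2 @ Rw k) = drop (s - 2) (mid @ p2 @ Rw k)" using lp b2 by simp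
      have t: "take s (p1 @ mid @ p2 @ Rw k) = p1 @ take (s - 2) (mid @ p2 @ Rw k)" using lp b2 by simp
      have omeq: "Om (drop (s - 2) (Rw k) @ p1 @ take (s - 2) (mid @ p2 @ Rw k)) = Om (drop (s - 2) (Rw k :: ('i \<times> bool) list)) * (omega0 p1 :: 'k) * Om (take (s - 2) (mid @ p2 @ Rw k))"
      proof (rule Om_kill)
        have "length (drop (s - 2) (Rw k :: ('i \<times> bool) list)) = 4 * k + 2 - s" using b2 by simp
        moreover have "even (4 * k + 2 - s)" using b2 by presburger
        ultimately show "even (length (drop (s - 2) (Rw k :: ('i \<times> bool) list)))" by simp
      qed (use lp in auto)
      show "f (take (h + 2) (rotate s (p1 @ mid @ p2 @ Rw k))) * Om (drop (h + 2) (rotate s (p1 @ mid @ p2 @ Rw k)))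
          = omega0 p1 * (f (take (h + 2) (drop (s - 2) (mid @ p2 @ Rw k))) * Om (drop (s - 2) (Rw k :: ('i \<times> bool) list)) * Om (take (s - 2) (mid @ p2 @ Rw k)))"
        unfolding rs[OF b2(2,3) p] d t omeq by (simp only: mult_ac)
    qed
  next
    case b3
    show ?thesis
    proof (rule SS_zero)
      fix p1 p2 :: "('i \<times> bool) list" assume p: "p1 \<in> W 2" "p2 \<in> W 2"
      have "odd (s - 2)" using b3 by presburger
      then have "(Om (drop (s - 2) (Rw k :: ('i \<times> bool) list) @ take s (p1 @ mid @ p2 @ Rw k)) :: 'k) = 0"
        by (rule Zdrop) (use b3 in auto)
      moreover have two: "2 \<le> s" "s \<le> 4 * k + 2" using b3 by auto
      ultimately show "f (take (h + 2) (rotate s (p1 @ mid @ p2 @ Rw k))) * Om (drop (h + 2) (rotate s (p1 @ mid @ p2 @ Rw k))) = 0"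
        unfolding rs[OF two p] by simp
    qed
  next
    case b4
    have sk: "2 \<le> s" "s \<le> 4 * k + 2" "h + 4 \<le> s" using b4 kk by auto
    have dr: "drop (s - 2) (Rw k :: ('i \<times> bool) list) = [rl (4 * k - 1)]"
      using b4 kk by (simp add: drop_Rw upt_conv_Cons)
    show ?thesis
    proof (rule GenHead[OF u(2) lm, where t = "s - (h + 4)" and k = k and x = "rl (4 * k - 1)"
          and c = "f (take (h + 2) (drop (s - (h + 4)) (Rw k)))"])
      show "3 \<le> s - (h + 4)" "s - (h + 4) \<le> 4 * k" using b4 kk by auto
      fix p1 p2 :: "('i \<times> bool) list" assume p: "p1 \<in> W 2" "p2 \<in> W 2"
      then have lp: "length p1 = 2" "length p2 = 2" by (auto simp: W_def)
      have lu: "length (p1 @ mid @ p2) = h + 4" using lp lm by simp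
      have d: "drop s (p1 @ mid @ p2 @ Rw k) = drop (s - (h + 4)) (Rw k)"
        using drop_app_ge[of "p1 @ mid @ p2" s "Rw k"] lu sk by simp
      have t: "take s (p1 @ mid @ p2 @ Rw k) = p1 @ mid @ p2 @ take (s - (h + 4)) (Rw k)"
        using take_app_ge[of "p1 @ mid @ p2" s "Rw k"] lu sk by simp
      show "f (take (h + 2) (rotate s (p1 @ mid @ p2 @ Rw k))) * Om (drop (h + 2) (rotate s (p1 @ mid @ p2 @ Rw k)))
        = f (take (h + 2) (drop (s - (h + 4)) (Rw k))) * Om (rl (4 * k - 1) # p1 @ mid @ p2 @ take (s - (h + 4)) (Rw k))"
        unfolding rs[OF sk(1,2) p] d t dr by simp
    qed
  next
    case b5
    have rb: "take (h + 2) (rotate s ((p1 @ mid @ p2) @ Rw k)) = drop (s - (h + 4)) (Rw k) @ take (s - 4 * k - 2) (p1 @ mid @ p2)"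
      "drop (h + 2) (rotate s ((p1 @ mid @ p2) @ Rw k)) = drop (s - 4 * k - 2) (p1 @ mid @ p2) @ take (s - (h + 4)) (Rw k)"
      if "p1 \<in> W 2" "p2 \<in> W 2" for p1 p2 :: "('i \<times> bool) list"
      using rot_big[of "p1 @ mid @ p2" "h + 4" "Rw k" "4 * k" s "h + 2"] that lm b5 s kk
      by (auto simp: W_def)
    show ?thesis
    proof (rule GenTail[OF u(2) lm, where j = "s - 4 * k - 2" and t = "s - (h + 4)" and k = k
          and g = "\<lambda>x. f (drop (s - (h + 4)) (Rw k) @ x)"])
      show "s - 4 * k - 2 \<le> h + 3" "3 \<le> s - (h + 4)" "s - (h + 4) \<le> 4 * k" using b5 s kk by auto
      fix p1 p2 :: "('i \<times> bool) list" assume p: "p1 \<in> W 2" "p2 \<in> W 2"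
      show "f (take (h + 2) (rotate s (p1 @ mid @ p2 @ Rw k))) * Om (drop (h + 2) (rotate s (p1 @ mid @ p2 @ Rw k)))
        = f (drop (s - (h + 4)) (Rw k) @ take (s - 4 * k - 2) (p1 @ mid @ p2)) * Om (drop (s - 4 * k - 2) (p1 @ mid @ p2) @ take (s - (h + 4)) (Rw k))"
        using rb[OF p] by simp
    qed
  qed
qed

lemma swap3: "(\<Sum>x\<in>A. \<Sum>y\<in>B. \<Sum>z\<in>C. F x y z) = (\<Sum>z\<in>C. \<Sum>x\<in>A. \<Sum>y\<in>B. F x y z)"
proof -
  have "(\<Sum>x\<in>A. \<Sum>y\<in>B. \<Sum>z\<in>C. F x y z) = (\<Sum>x\<in>A. \<Sum>z\<in>C. \<Sum>y\<in>B. F x y z)"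
    by (rule sum.cong[OF refl], rule sum.swap)
  also have "\<dots> = (\<Sum>z\<in>C. \<Sum>x\<in>A. \<Sum>y\<in>B. F x y z)" by (rule sum.swap)
  finally show ?thesis .
qed

theorem proposition5p2:
  fixes a b :: "('i::finite, 'k::field_char_0) tens"
    and m :: nat
  assumes "m \<ge> 4"
    and "a \<in> QVQ m"
    and "b \<in> hom (m - 2)"
    and "\<exists>p\<ge>1. \<forall>l\<ge>p. cyc_zero (\<lambda>w. tmul a (tpow omega0 l) w + tmul b (tpow omega0 (l + 1)) w)"
  shows "a = (\<lambda>w. 0)"
proof -
  obtain p where p: "\<forall>l\<ge>p. cyc_zero (\<lambda>w. tmul a (tpow omega0 l) w + tmul b (tpow omega0 (l + 1)) w)"
    using assms(4) by blast
  define h where "h = m - 4"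
  have mh: "m = h + 4" using assms(1) by (simp add: h_def)
  define k where "k = p + m + 10"
  have kk: "h + 10 \<le> 4 * k" by (simp add: k_def h_def)
  define X where "X = (\<lambda>w. tmul a (tpow omega0 (2 * k)) w + tmul b (tpow omega0 (2 * k + 1)) w)"
  have pk: "p \<le> 2 * k" by (simp add: k_def)
  have "cyc_zero X" unfolding X_def using p pk by blast
  then have rz: "rotsum X w = 0" for w using rotsum_commsp by (auto simp: cyc_zero_def)
  have QP: "QP m a" by (rule QVQ_QP[OF assms(1,2)])
  then have ha: "a \<in> hom m" by (simp add: QP_def)
  define n where "n = h + 4 + 4 * k"
  have Xv: "X z = a (take (h + 4) z) * Om (drop (h + 4) z) + b (take (h + 2) z) * Om (drop (h + 2) z)"
    if "length z = n" for z
  proof -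
    have "m - 2 = h + 2" using mh by simp
    then show ?thesis using that ha assms(3)
      by (simp add: X_def tmul_left tpow_omega mh n_def del: tpow.simps)
  qed
  show ?thesis
  proof
    fix u :: "('i \<times> bool) list"
    show "a u = 0"
    proof (cases "length u = m")
      case False then show ?thesis using ha by (simp add: hom_def)
    next
      case True
      define u1 where "u1 = take 2 u"
      define umid where "umid = take h (drop 2 u)"
      define u2 where "u2 = drop (h + 2) u"
      have ueq: "u = u1 @ umid @ u2"
      proof -
        have "u = take 2 u @ take h (drop 2 u) @ drop h (drop 2 u)" by (simp only: append_take_drop_id)
        moreover have "drop h (drop 2 u) = drop (h + 2) u" by (simp only: drop_drop)
        ultimately show ?thesis by (simp only: u1_def umid_def u2_def)
      qed
      have lu: "u1 \<in> W 2" "u2 \<in> W 2" "length umid = h" using True mh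
        by (simp_all add: u1_def u2_def umid_def W_def)
      define A where "A = (\<lambda>s p1 p2. Pm u1 p1 * Pm u2 p2 *
        (a (take (h + 4) (rotate s (p1 @ umid @ p2 @ Rw k))) * Om (drop (h + 4) (rotate s (p1 @ umid @ p2 @ Rw k)))))"
      define B where "B = (\<lambda>s p1 p2. Pm u1 p1 * Pm u2 p2 *
        (b (take (h + 2) (rotate s (p1 @ umid @ p2 @ Rw k))) * Om (drop (h + 2) (rotate s (p1 @ umid @ p2 @ Rw k)))))"
      have lw: "length (p1 @ umid @ p2 @ Rw k) = n" if "p1 \<in> W 2" "p2 \<in> W 2" for p1 p2 :: "('i \<times> bool) list"
        using that lu by (simp add: W_def n_def)
      have rsv: "Pm u1 p1 * Pm u2 p2 * rotsum X (p1 @ umid @ p2 @ Rw k) = (\<Sum>s<n. A s p1 p2 + B s p1 p2)"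
        if "p1 \<in> W 2" "p2 \<in> W 2" for p1 p2 :: "('i \<times> bool) list"
      proof -
        have "rotsum X (p1 @ umid @ p2 @ Rw k) = (\<Sum>s<n. X (rotate s (p1 @ umid @ p2 @ Rw k)))"
          using lw[OF that] by (simp add: rotsum_def)
        also have "\<dots> = (\<Sum>s<n. a (take (h + 4) (rotate s (p1 @ umid @ p2 @ Rw k))) * Om (drop (h + 4) (rotate s (p1 @ umid @ p2 @ Rw k)))
            + b (take (h + 2) (rotate s (p1 @ umid @ p2 @ Rw k))) * Om (drop (h + 2) (rotate s (p1 @ umid @ p2 @ Rw k))))"
          by (rule sum.cong[OF refl], rule Xv) (use lw[OF that] in simp)
        finally show ?thesis by (simp add: A_def B_def sum_distrib_left algebra_simps)
      qed
      have "0 = (\<Sum>p1\<in>W 2. \<Sum>p2\<in>W 2. Pm u1 p1 * Pm u2 p2 * rotsum X (p1 @ umid @ p2 @ Rw k))"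
        by (simp add: rz)
      also have "\<dots> = (\<Sum>p1\<in>W 2. \<Sum>p2\<in>W 2. \<Sum>s<n. A s p1 p2 + B s p1 p2)"
        by (intro sum.cong refl rsv)
      also have "\<dots> = (\<Sum>s<n. \<Sum>p1\<in>W 2. \<Sum>p2\<in>W 2. A s p1 p2 + B s p1 p2)"
        by (rule swap3)
      also have "\<dots> = (\<Sum>s<n. (\<Sum>p1\<in>W 2. \<Sum>p2\<in>W 2. A s p1 p2) + (\<Sum>p1\<in>W 2. \<Sum>p2\<in>W 2. B s p1 p2))"
        by (simp add: sum.distrib)
      also have "\<dots> = (\<Sum>s<n. if s = 0 then (\<Sum>p1\<in>W 2. \<Sum>p2\<in>W 2. A 0 p1 p2) else 0)"
      proof (rule sum.cong[OF refl])
        fix s assume s: "s \<in> {..<n}"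
        have bz: "(\<Sum>p1\<in>W 2. \<Sum>p2\<in>W 2. B s p1 p2) = 0"
          unfolding B_def by (rule SB_zero[OF lu(1,2,3) kk]) (use s in \<open>simp add: n_def\<close>)
        have az: "(\<Sum>p1\<in>W 2. \<Sum>p2\<in>W 2. A s p1 p2) = 0" if "s \<noteq> 0"
          unfolding A_def by (rule SA_zero[OF lu(1,2,3) kk]) (use s that in \<open>simp_all add: n_def\<close>)
        show "(\<Sum>p1\<in>W 2. \<Sum>p2\<in>W 2. A s p1 p2) + (\<Sum>p1\<in>W 2. \<Sum>p2\<in>W 2. B s p1 p2)
          = (if s = 0 then (\<Sum>p1\<in>W 2. \<Sum>p2\<in>W 2. A 0 p1 p2) else 0)"
          using bz az by simp
      qed
      also have "\<dots> = (\<Sum>p1\<in>W 2. \<Sum>p2\<in>W 2. A 0 p1 p2)"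
        by (simp add: n_def)
      also have "\<dots> = (\<Sum>p1\<in>W 2. \<Sum>p2\<in>W 2. Pm u1 p1 * Pm u2 p2 * a (p1 @ umid @ p2)) * Om (Rw k :: ('i \<times> bool) list)"
      proof -
        have "A 0 p1 p2 = Pm u1 p1 * Pm u2 p2 * a (p1 @ umid @ p2) * Om (Rw k :: ('i \<times> bool) list)"
          if "p1 \<in> W 2" "p2 \<in> W 2" for p1 p2 :: "('i \<times> bool) list"
        proof -
          have l: "length (p1 @ umid @ p2) = h + 4" using that lu by (simp add: W_def)
          have "take (h + 4) (p1 @ umid @ p2 @ Rw k) = p1 @ umid @ p2"
            using take_app_ge[of "p1 @ umid @ p2" "h + 4" "Rw k"] l by simp
          moreover have "drop (h + 4) (p1 @ umid @ p2 @ Rw k) = Rw k"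
            using drop_app_ge[of "p1 @ umid @ p2" "h + 4" "Rw k"] l by simp
          ultimately show ?thesis by (simp add: A_def)
        qed
        then show ?thesis by (simp add: sum_distrib_right)
      qed
      also have "(\<Sum>p1\<in>W 2. \<Sum>p2\<in>W 2. Pm u1 p1 * Pm u2 p2 * a (p1 @ umid @ p2)) = a u"
      proof -
        have inner: "(\<Sum>p2\<in>W 2. Pm u2 p2 * a (p1 @ umid @ p2)) = a (p1 @ umid @ u2)" if "p1 \<in> W 2" for p1
        proof -
          have "(\<Sum>p\<in>W 2. omega0 p * a (p1 @ umid @ p)) = 0" using QP that by (simp add: QP_def W_def)
          then show ?thesis using projsum[OF lu(2), of "\<lambda>p2. a (p1 @ umid @ p2)"] by simp
        qed
        have "(\<Sum>p1\<in>W 2. \<Sum>p2\<in>W 2. Pm u1 p1 * Pm u2 p2 * a (p1 @ umid @ p2))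
            = (\<Sum>p1\<in>W 2. Pm u1 p1 * (\<Sum>p2\<in>W 2. Pm u2 p2 * a (p1 @ umid @ p2)))"
          by (simp add: sum_distrib_left mult.assoc)
        also have "\<dots> = (\<Sum>p1\<in>W 2. Pm u1 p1 * a (p1 @ umid @ u2))"
          by (rule sum.cong[OF refl]) (simp add: inner)
        also have "\<dots> = a (u1 @ umid @ u2)"
        proof -
          have "(\<Sum>p\<in>W 2. omega0 p * a (p @ umid @ u2)) = 0" using QP lu by (simp add: QP_def W_def)
          then show ?thesis using projsum[OF lu(1), of "\<lambda>p1. a (p1 @ umid @ u2)"] by simp
        qed
        finally show ?thesis using ueq by simp
      qed
      finally have "a u * (-1) ^ k = 0" by (simp add: Om_Rw)
      then show ?thesis by simp
    qed
  qed
qed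

end
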